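(* There exists a computable (2,1):1 structure $\mathcal{A}=(\omega,f)$ with no $\mathbb{Z}$-chains such that $\beta_{\mathcal{A}}$ and $iso_{\mathcal{A}}$ are computable, but $\mathcal{A}$ is not computably categorical; that is, there is a computable (2,1):1 structure $\mathcal{B}=(\omega,g)$ isomorphic to $\mathcal{A}$ such that no computable function is an isomorphism from $\mathcal{A}$ onto $\mathcal{B}$. (Necessarily such $\mathcal{A}$ has infinitely many $k$-cycles for some $k$; the example given consists entirely of $1$-cycles.)
   Context: A (2,1):1 structure is a pair $\mathcal{A}=(A,f)$ with $A$ a countable set and $f:A\to A$ such that $|f^{-1}(a)|\in\{1,2\}$ for every $a\in A$; it is computable if $A$ is a computable set and $f$ is computable. An element $x$ is cyclic if $f^n(x)=x$ for some $n>0$. The orbit of $x$ is $\{y:\exists m,n\ (f^m(x)=f^n(y))\}$. An orbit containing a directed cycle with exactly $k$ elements is a $k$-cycle; an orbit containing no cyclic element is a $\mathbb{Z}$-chain. The branching function is $\beta_{\mathcal{A}}(x)=|f^{-1}(x)|\in\{1,2\}$ and $\Lambda_{\mathcal{A}}=\{x:\beta_{\mathcal{A}}(x)=2\}$. For $x\in A$, $Tree_{\mathcal{A}}(x)$ is the directed graph with vertex set $\{a:\exists n\ge0\,(f^n(a)=x)\}$ and edges $(a,f(a))$ between such vertices. The branch isomorphism function $iso_{\mathcal{A}}:\Lambda_{\mathcal{A}}\to\{0,1\}$ is given, for $x\in\Lambda_{\mathcal{A}}$ with distinct pre-images $x_1,x_2$, by $iso_{\mathcal{A}}(x)=1$ iff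 $Tree_{\mathcal{A}}(x_1)\cong Tree_{\mathcal{A}}(x_2)$; it is computable if it is the restriction to $\Lambda_{\mathcal{A}}$ of a partial computable function. A computable structure is computably categorical if any two computable structures isomorphic to it are computably isomorphic. *)

theory Defs
  imports Main
begin

datatype recf = Zero | Succ | Proj nat | Comp recf "recf list" | Prim recf recf | Mu recf

inductive eval :: "recf \<Rightarrow> nat list \<Rightarrow> nat \<Rightarrow> bool" where
  eval_Zero: "eval Zero xs 0"
| eval_Succ: "eval Succ (x # xs) (Suc x)"
| eval_Proj: "i < length xs \<Longrightarrow> eval (Proj i) xs (xs ! i)"
| eval_Comp: "list_all2 (\<lambda>g y. eval g xs y) gs ys \<Longrightarrow> eval f ys z \<Longrightarrow> eval (Comp f gs) xs z"
| eval_Prim0: "eval g xs z \<Longrightarrow> eval (Prim g h) (0 # xs) z"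
| eval_PrimS: "eval (Prim g h) (n # xs) y \<Longrightarrow> eval h (y # n # xs) z
     \<Longrightarrow> eval (Prim g h) (Suc n # xs) z"
| eval_Mu: "eval f (n # xs) 0 \<Longrightarrow> (\<forall>m<n. \<exists>y. eval f (m # xs) (Suc y))
     \<Longrightarrow> eval (Mu f) xs n"

definition computable :: "(nat \<Rightarrow> nat) \<Rightarrow> bool" where
  "computable F \<longleftrightarrow> (\<exists>c. \<forall>x. eval c [x] (F x))"

definition computable_on :: "nat set \<Rightarrow> (nat \<Rightarrow> nat) \<Rightarrow> bool" where
  "computable_on S F \<longleftrightarrow> (\<exists>c. \<forall>x\<in>S. eval c [x] (F x))"

definition is_21_1 :: "(nat \<Rightarrow> nat) \<Rightarrow> bool" where
  "is_21_1 f \<longleftrightarrow> (\<forall>a. card (f -` {a}) \<in> {1, 2})"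

definition cyclic :: "(nat \<Rightarrow> nat) \<Rightarrow> nat \<Rightarrow> bool" where
  "cyclic f x \<longleftrightarrow> (\<exists>n>0. (f ^^ n) x = x)"

definition orbit :: "(nat \<Rightarrow> nat) \<Rightarrow> nat \<Rightarrow> nat set" where
  "orbit f x = {y. \<exists>m n. (f ^^ m) x = (f ^^ n) y}"

text \<open>No orbit is a Z-chain, i.e. every orbit contains a cyclic element.\<close>
definition no_Z_chains :: "(nat \<Rightarrow> nat) \<Rightarrow> bool" where
  "no_Z_chains f \<longleftrightarrow> (\<forall>x. \<exists>y\<in>orbit f x. cyclic f y)"

definition branching :: "(nat \<Rightarrow> nat) \<Rightarrow> nat \<Rightarrow> nat" where
  "branching f x = card (f -` {x})"

definition Lambda :: "(nat \<Rightarrow> nat) \<Rightarrow> nat set" where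
  "Lambda f = {x. branching f x = 2}"

definition tree_verts :: "(nat \<Rightarrow> nat) \<Rightarrow> nat \<Rightarrow> nat set" where
  "tree_verts f x = {a. \<exists>n. (f ^^ n) a = x}"

definition tree_edges :: "(nat \<Rightarrow> nat) \<Rightarrow> nat \<Rightarrow> (nat \<times> nat) set" where
  "tree_edges f x = {(a, f a) | a. a \<in> tree_verts f x \<and> f a \<in> tree_verts f x}"

definition tree_iso :: "(nat \<Rightarrow> nat) \<Rightarrow> nat \<Rightarrow> nat \<Rightarrow> bool" where
  "tree_iso f x1 x2 \<longleftrightarrow> (\<exists>h. bij_betw h (tree_verts f x1) (tree_verts f x2) \<and>
     (\<forall>a\<in>tree_verts f x1. \<forall>b\<in>tree_verts f x1.
        (a, b) \<in> tree_edges f x1 \<longleftrightarrow> (h a, h b) \<in> tree_edges f x2))"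

text \<open>Branch isomorphism function (meaningful on Lambda f).\<close>
definition iso_fun :: "(nat \<Rightarrow> nat) \<Rightarrow> nat \<Rightarrow> nat" where
  "iso_fun f x = (if \<exists>x1 x2. x1 \<noteq> x2 \<and> f x1 = x \<and> f x2 = x \<and> tree_iso f x1 x2 then 1 else 0)"

definition struct_iso :: "(nat \<Rightarrow> nat) \<Rightarrow> (nat \<Rightarrow> nat) \<Rightarrow> (nat \<Rightarrow> nat) \<Rightarrow> bool" where
  "struct_iso f g h \<longleftrightarrow> bij h \<and> (\<forall>x. h (f x) = g (h x))"

end

theory Submission
  imports Defs "HOL-Library.Nat_Bijection" "HOL-Library.Infinite_Set"
begin


section \<open>Basic program combinators\<close>

lemma eval_Comp1: "eval g xs y \<Longrightarrow> eval f [y] z \<Longrightarrow> eval (Comp f [g]) xs z"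
  by (rule eval_Comp[where ys="[y]"]) auto

lemma eval_Comp2: "eval g1 xs y1 \<Longrightarrow> eval g2 xs y2 \<Longrightarrow> eval f [y1, y2] z \<Longrightarrow> eval (Comp f [g1, g2]) xs z"
  by (rule eval_Comp[where ys="[y1,y2]"]) auto

lemma eval_Proj0: "eval (Proj 0) (x # xs) x"
  using eval_Proj[of 0 "x#xs"] by simp
lemma eval_Proj1: "eval (Proj 1) (x # y # xs) y"
  using eval_Proj[of 1 "x#y#xs"] by simp
lemma eval_Proj1'[intro]: "eval (Proj (Suc 0)) (x # y # xs) y"
  using eval_Proj[of 1 "x#y#xs"] by simp
lemma eval_Proj2: "eval (Proj 2) (x # y # z # xs) z"
  using eval_Proj[of 2 "x#y#z#xs"] by simp

primrec constp :: "nat \<Rightarrow> recf" where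
  "constp 0 = Zero"
| "constp (Suc k) = Comp Succ [constp k]"

lemma eval_constp: "eval (constp k) xs k"
  by (induction k) (auto intro: eval.intros eval_Comp1)

definition addp where "addp = Prim (Proj 0) (Comp Succ [Proj 0])"
lemma eval_addp: "eval addp [n, x] (n + x)"
  unfolding addp_def
proof (induction n)
  case 0 then show ?case by (auto intro: eval_Prim0 eval_Proj0)
next
  case (Suc n)
  then show ?case by (auto intro!: eval_PrimS eval_Comp1 eval_Proj0 eval_Succ)
qed

definition predp where "predp = Prim Zero (Proj 1)"
lemma eval_predp: "eval predp [n] (n - 1)"
  unfolding predp_def
proof (induction n)
  case 0 then show ?case by (auto intro: eval_Prim0 eval_Zero)
next
  case (Suc n) then show ?case by (auto intro!: eval_PrimS)
qed

definition subp where "subp = Prim (Proj 0) (Comp predp [Proj 0])"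
lemma eval_subp: "eval subp [n, x] (x - n)"
  unfolding subp_def
proof (induction n)
  case 0 then show ?case by (auto intro: eval_Prim0 eval_Proj0)
next
  case (Suc n)
  have "eval (Comp predp [Proj 0]) [x - n, n, x] (x - Suc n)"
    using eval_Comp1[OF eval_Proj0 eval_predp, of "x - n" "[n, x]"] by simp
  then show ?case using Suc by (auto intro!: eval_PrimS)
qed

definition mulp where "mulp = Prim Zero (Comp addp [Proj 0, Proj 2])"
lemma eval_mulp: "eval mulp [n, x] (n * x)"
  unfolding mulp_def
proof (induction n)
  case 0 then show ?case by (auto intro: eval_Prim0 eval_Zero)
next
  case (Suc n)
  have "eval (Comp addp [Proj 0, Proj 2]) [n * x, n, x] (n * x + x)"
    by (rule eval_Comp2[OF eval_Proj0 eval_Proj2 eval_addp])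
  then show ?case using Suc by (auto intro!: eval_PrimS simp: add.commute)
qed

definition trip where "trip = Prim Zero (Comp addp [Proj 0, Comp Succ [Proj 1]])"
lemma eval_trip: "eval trip [n] (triangle n)"
  unfolding trip_def
proof (induction n)
  case 0 then show ?case by (auto intro: eval_Prim0 eval_Zero)
next
  case (Suc n)
  have "eval (Comp addp [Proj 0, Comp Succ [Proj 1]]) [triangle n, n] (triangle n + Suc n)"
    by (rule eval_Comp2[OF eval_Proj0 eval_Comp1[OF eval_Proj1 eval_Succ] eval_addp])
  then show ?case using Suc by (auto intro!: eval_PrimS)
qed

definition pr :: "nat \<Rightarrow> nat \<Rightarrow> nat" where "pr a b = prod_encode (a, b)"
definition p1 :: "nat \<Rightarrow> nat" where "p1 z = fst (prod_decode z)"
definition p2 :: "nat \<Rightarrow> nat" where "p2 z = snd (prod_decode z)"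

lemma p1_pr[simp]: "p1 (pr a b) = a" and p2_pr[simp]: "p2 (pr a b) = b"
  by (simp_all add: p1_def p2_def pr_def)
lemma pr_p12[simp]: "pr (p1 z) (p2 z) = z"
  by (simp add: p1_def p2_def pr_def)
lemma pr_inj[simp]: "pr a b = pr c d \<longleftrightarrow> a = c \<and> b = d"
  by (metis p1_pr p2_pr)

definition prp where "prp = Comp addp [Comp trip [Comp addp [Proj 0, Proj 1]], Proj 0]"
lemma eval_prp: "eval prp [a, b] (pr a b)"
  unfolding prp_def pr_def prod_encode_def
  by (auto intro!: eval_Comp2 eval_Comp1 eval_Proj0 eval_Proj1 eval_addp eval_trip)

lemma eval_Mu2:
  assumes "\<And>a b. eval p [a, b] (T a b)" and "\<exists>n. T n x = 0"
  shows "eval (Mu p) [x] (LEAST n. T n x = 0)"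
proof (rule eval_Mu)
  show "eval p [(LEAST n. T n x = 0), x] 0"
    using assms(1)[of "LEAST n. T n x = 0" x] LeastI_ex[OF assms(2)] by simp
  show "\<forall>m<(LEAST n. T n x = 0). \<exists>y. eval p [m, x] (Suc y)"
  proof (intro allI impI)
    fix m assume "m < (LEAST n. T n x = 0)"
    then have "T m x \<noteq> 0" using not_less_Least by blast
    then show "\<exists>y. eval p [m, x] (Suc y)" using assms(1)[of m x]
      by (metis not0_implies_Suc)
  qed
qed

definition wdec :: "nat \<Rightarrow> nat" where "wdec z = (LEAST t. Suc z - triangle (Suc t) = 0)"

lemma tri_ge: "n \<le> triangle n"
  by (induction n) auto

lemma wdec_ex: "\<exists>t. Suc z - triangle (Suc t) = 0"
  by (rule exI[of _ z]) (use tri_ge[of "Suc z"] in auto)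

lemma wdec_prop: "z < triangle (Suc (wdec z))" "triangle (wdec z) \<le> z"
proof -
  show "z < triangle (Suc (wdec z))"
    using LeastI_ex[OF wdec_ex[of z]] unfolding wdec_def by simp
  show "triangle (wdec z) \<le> z"
  proof (cases "wdec z")
    case 0 then show ?thesis by simp
  next
    case (Suc t)
    then have "t < wdec z" by simp
    then have "\<not> (Suc z - triangle (Suc t) = 0)" unfolding wdec_def by (rule not_less_Least)
    then show ?thesis using Suc by simp
  qed
qed

lemma prod_decode_w: "prod_decode z = (z - triangle (wdec z), wdec z - (z - triangle (wdec z)))"
proof -
  let ?w = "wdec z" let ?a = "z - triangle ?w"
  have le: "?a \<le> ?w" using wdec_prop[of z] by simp
  have "prod_encode (?a, ?w - ?a) = z"
    using le wdec_prop[of z] by (simp add: prod_encode_def)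
  then show ?thesis by (metis prod_encode_inverse)
qed

definition wdp where "wdp = Mu (Comp subp [Comp trip [Comp Succ [Proj 0]], Comp Succ [Proj 1]])"
lemma eval_wdp: "eval wdp [z] (wdec z)"
  unfolding wdp_def wdec_def
  by (rule eval_Mu2[where T="\<lambda>t z. Suc z - triangle (Suc t)", OF
     eval_Comp2[OF eval_Comp1[OF eval_Comp1[OF eval_Proj0 eval_Succ] eval_trip]
        eval_Comp1[OF eval_Proj1 eval_Succ] eval_subp] wdec_ex])

definition p1p where "p1p = Comp subp [Comp trip [wdp], Proj 0]"
lemma eval_p1p: "eval p1p [z] (p1 z)"
  unfolding p1p_def p1_def prod_decode_w
  by (auto intro!: eval_Comp2 eval_Comp1 eval_Proj0 eval_wdp eval_subp eval_trip)

definition p2p where "p2p = Comp subp [p1p, wdp]"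
lemma eval_p2p: "eval p2p [z] (p2 z)"
proof -
  have "p2 z = wdec z - p1 z" unfolding p1_def p2_def prod_decode_w by simp
  then show ?thesis unfolding p2p_def
    by (auto intro!: eval_Comp2 eval_p1p eval_wdp eval_subp)
qed

section \<open>Closure of computable unary functions\<close>

named_theorems cI

definition prog2 :: "recf \<Rightarrow> (nat \<Rightarrow> nat \<Rightarrow> nat) \<Rightarrow> bool" where
  "prog2 p F \<longleftrightarrow> (\<forall>a b. eval p [a, b] (F a b))"

lemma comp_2:
  assumes "prog2 p F" "computable G" "computable H"
  shows "computable (\<lambda>x. F (G x) (H x))"
proof -
  obtain cg ch where "\<forall>x. eval cg [x] (G x)" "\<forall>x. eval ch [x] (H x)"
    using assms(2,3) unfolding computable_def by blast
  then have "\<forall>x. eval (Comp p [cg, ch]) [x] (F (G x) (H x))"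
    using assms(1) unfolding prog2_def by (auto intro: eval_Comp2)
  then show ?thesis unfolding computable_def by blast
qed

lemma comp_1:
  assumes "\<And>x. eval p [x] (F x)" "computable G"
  shows "computable (\<lambda>x. F (G x))"
proof -
  obtain cg where "\<forall>x. eval cg [x] (G x)"
    using assms(2) unfolding computable_def by blast
  then have "\<forall>x. eval (Comp p [cg]) [x] (F (G x))"
    using assms(1) by (auto intro: eval_Comp1)
  then show ?thesis unfolding computable_def by blast
qed

lemma computable_comp: "computable F \<Longrightarrow> computable G \<Longrightarrow> computable (\<lambda>x. F (G x))"
  using comp_1 unfolding computable_def by metis

lemma c_id[cI]: "computable (\<lambda>x. x)"
  unfolding computable_def using eval_Proj0 by blast
lemma c_const[cI]: "computable (\<lambda>x. k)"
  unfolding computable_def using eval_constp by blast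
lemma c_Suc[cI]: "computable F \<Longrightarrow> computable (\<lambda>x. Suc (F x))"
  by (rule comp_1[OF eval_Succ])
lemma c_add[cI]: "computable F \<Longrightarrow> computable G \<Longrightarrow> computable (\<lambda>x. F x + G x)"
  by (rule comp_2[where p=addp]) (auto simp: prog2_def eval_addp)
lemma c_sub[cI]: "computable F \<Longrightarrow> computable G \<Longrightarrow> computable (\<lambda>x. F x - G x)"
  using comp_2[where p=subp and F="\<lambda>a b. b - a" and G=G and H=F]
  by (auto simp: prog2_def eval_subp)
lemma c_mul[cI]: "computable F \<Longrightarrow> computable G \<Longrightarrow> computable (\<lambda>x. F x * G x)"
  by (rule comp_2[where p=mulp]) (auto simp: prog2_def eval_mulp)
lemma c_pr[cI]: "computable F \<Longrightarrow> computable G \<Longrightarrow> computable (\<lambda>x. pr (F x) (G x))"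
  by (rule comp_2[where p=prp]) (auto simp: prog2_def eval_prp)
lemma c_p1[cI]: "computable F \<Longrightarrow> computable (\<lambda>x. p1 (F x))"
  by (rule comp_1[OF eval_p1p])
lemma c_p2[cI]: "computable F \<Longrightarrow> computable (\<lambda>x. p2 (F x))"
  by (rule comp_1[OF eval_p2p])

lemma prog2_of_unary:
  assumes "computable U" shows "\<exists>p. prog2 p (\<lambda>a b. U (pr a b))"
proof -
  obtain c where "\<forall>x. eval c [x] (U x)" using assms unfolding computable_def by blast
  then have "prog2 (Comp c [prp]) (\<lambda>a b. U (pr a b))"
    unfolding prog2_def by (auto intro: eval_Comp1 eval_prp)
  then show ?thesis by blast
qed

lemma c_iter[cI]:
  assumes S: "computable S" and "computable N" "computable Z"
  shows "computable (\<lambda>x. (S ^^ N x) (Z x))"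
proof -
  obtain cs where cs: "\<forall>x. eval cs [x] (S x)" using S unfolding computable_def by blast
  have "prog2 (Prim (Proj 0) (Comp cs [Proj 0])) (\<lambda>n z. (S ^^ n) z)"
    unfolding prog2_def
  proof (intro allI)
    fix n z show "eval (Prim (Proj 0) (Comp cs [Proj 0])) [n, z] ((S ^^ n) z)"
    proof (induction n)
      case 0 then show ?case by (auto intro: eval_Prim0 eval_Proj0)
    next
      case (Suc n)
      then show ?case using cs by (auto intro!: eval_PrimS eval_Comp1 eval_Proj0)
    qed
  qed
  then show ?thesis using comp_2 assms by blast
qed

definition cpred :: "(nat \<Rightarrow> bool) \<Rightarrow> bool" where
  "cpred P \<longleftrightarrow> computable (\<lambda>x. if P x then 1 else 0)"

lemma c_if[cI]:
  assumes "cpred P" "computable A" "computable B"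
  shows "computable (\<lambda>x. if P x then A x else B x)"
proof -
  let ?b = "\<lambda>x. if P x then 1 else (0::nat)"
  have "computable (\<lambda>x. A x * ?b x + B x * (1 - ?b x))"
    using assms unfolding cpred_def by (intro cI)
  moreover have "(\<lambda>x. A x * ?b x + B x * (1 - ?b x)) = (\<lambda>x. if P x then A x else B x)"
    by auto
  ultimately show ?thesis by simp
qed

lemma cp_eq[cI]: "computable A \<Longrightarrow> computable B \<Longrightarrow> cpred (\<lambda>x. A x = B x)"
proof -
  assume prems: "computable A" "computable B"
  have "computable (\<lambda>x. 1 - ((A x - B x) + (B x - A x)))" by (intro cI prems)
  moreover have "(\<lambda>x. 1 - ((A x - B x) + (B x - A x))) = (\<lambda>x. if A x = B x then 1 else 0)"
    by auto
  ultimately show ?thesis unfolding cpred_def by simp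
qed

lemma cp_less[cI]: "computable A \<Longrightarrow> computable B \<Longrightarrow> cpred (\<lambda>x. A x < B x)"
proof -
  assume prems: "computable A" "computable B"
  have "computable (\<lambda>x. 1 - (1 - (B x - A x)))" by (intro cI prems)
  moreover have "(\<lambda>x. 1 - (1 - (B x - A x))) = (\<lambda>x. if A x < B x then 1 else 0)"
    by auto
  ultimately show ?thesis unfolding cpred_def by simp
qed

lemma cp_not[cI]: "cpred P \<Longrightarrow> cpred (\<lambda>x. \<not> P x)"
proof -
  assume prems: "cpred P"
  have "computable (\<lambda>x. if P x then 0 else 1)" by (intro cI prems)
  moreover have "(\<lambda>x. if P x then 0 else 1) = (\<lambda>x. if \<not> P x then 1 else (0::nat))" by auto
  ultimately show ?thesis unfolding cpred_def by simp
qed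

lemma cp_conj[cI]: "cpred P \<Longrightarrow> cpred Q \<Longrightarrow> cpred (\<lambda>x. P x \<and> Q x)"
proof -
  assume prems: "cpred P" "cpred Q"
  have "computable (\<lambda>x. if P x then (if Q x then 1 else 0) else 0)" by (intro cI prems)
  moreover have "(\<lambda>x. if P x then (if Q x then 1 else 0) else 0) = (\<lambda>x. if P x \<and> Q x then 1 else (0::nat))" by auto
  ultimately show ?thesis unfolding cpred_def by simp
qed

lemma cp_disj[cI]: "cpred P \<Longrightarrow> cpred Q \<Longrightarrow> cpred (\<lambda>x. P x \<or> Q x)"
proof -
  assume prems: "cpred P" "cpred Q"
  have "computable (\<lambda>x. if P x then 1 else (if Q x then 1 else 0))" by (intro cI prems)
  moreover have "(\<lambda>x. if P x then 1 else (if Q x then 1 else 0)) = (\<lambda>x. if P x \<or> Q x then 1 else (0::nat))"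
    by auto
  ultimately show ?thesis unfolding cpred_def by simp
qed

lemma cp_le[cI]: "computable A \<Longrightarrow> computable B \<Longrightarrow> cpred (\<lambda>x. A x \<le> B x)"
proof -
  assume prems: "computable A" "computable B"
  have "cpred (\<lambda>x. \<not> B x < A x)" by (intro cI prems)
  then show ?thesis by (simp add: not_less)
qed

lemma cp_True[cI]: "cpred (\<lambda>x. True)" and cp_False[cI]: "cpred (\<lambda>x. False)"
  unfolding cpred_def by (simp_all add: c_const)

lemma c_Least[cI]:
  assumes "cpred (\<lambda>z. P (p1 z) (p2 z))" and ex: "\<And>x. \<exists>n. P n x"
  shows "computable (\<lambda>x. LEAST n. P n x)"
proof -
  have "computable (\<lambda>z. 1 - (if P (p1 z) (p2 z) then 1 else 0))"
    by (intro cI assms(1))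
  then obtain p where p: "prog2 p (\<lambda>a b. 1 - (if P (p1 (pr a b)) (p2 (pr a b)) then 1 else 0))"
    using prog2_of_unary by blast
  let ?T = "\<lambda>a b. 1 - (if P a b then 1 else (0::nat))"
  have T: "\<And>a b. eval p [a, b] (?T a b)" using p unfolding prog2_def by simp
  have "\<And>x. eval (Mu p) [x] (LEAST n. ?T n x = 0)"
    by (rule eval_Mu2[OF T]) (use ex in auto)
  moreover have "\<And>x. (LEAST n. ?T n x = 0) = (LEAST n. P n x)"
    by (rule arg_cong[where f=Least]) auto
  ultimately show ?thesis unfolding computable_def by auto
qed

lemma c_div2[cI]: "computable F \<Longrightarrow> computable (\<lambda>x. F x div 2)"
proof -
  assume F: "computable F"
  have "computable (\<lambda>x. LEAST q. x < 2 * q + 2)"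
  proof (rule c_Least)
    show "cpred (\<lambda>z. p2 z < 2 * p1 z + 2)" by (intro cI)
    show "\<exists>n. x < 2 * n + 2" for x :: nat by (rule exI[of _ x]) simp
  qed
  moreover have "(\<lambda>x::nat. LEAST q. x < 2 * q + 2) = (\<lambda>x. x div 2)"
  proof
    fix x :: nat
    show "(LEAST q. x < 2 * q + 2) = x div 2"
      by (rule Least_equality) auto
  qed
  ultimately have "computable (\<lambda>x. x div 2)" by simp
  then show ?thesis using computable_comp[OF _ F] by auto
qed

lemma c_mod2[cI]: "computable F \<Longrightarrow> computable (\<lambda>x. F x mod 2)"
proof -
  assume prems: "computable F"
  have "computable (\<lambda>x. F x - 2 * (F x div 2))" by (intro cI prems)
  then show ?thesis by (simp add: minus_mult_div_eq_mod)
qed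

lemma cp_even[cI]: "computable F \<Longrightarrow> cpred (\<lambda>x. even (F x))"
proof -
  assume prems: "computable F"
  have "cpred (\<lambda>x. F x mod 2 = 0)" by (intro cI prems)
  then show ?thesis by (simp add: even_iff_mod_2_eq_zero)
qed


section \<open>Coded lists and the machine\<close>

definition cns :: "nat \<Rightarrow> nat \<Rightarrow> nat" where "cns x l = Suc (pr x l)"
definition hdn :: "nat \<Rightarrow> nat" where "hdn l = p1 (l - 1)"
definition tln :: "nat \<Rightarrow> nat" where "tln l = p2 (l - 1)"
definition dropn :: "nat \<Rightarrow> nat \<Rightarrow> nat" where "dropn a l = (tln ^^ a) l"

lemma hdn_cns[simp]: "hdn (cns x l) = x" and tln_cns[simp]: "tln (cns x l) = l"
  and cns_neq0[simp]: "cns x l \<noteq> 0" "0 \<noteq> cns x l"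
  by (simp_all add: cns_def hdn_def tln_def)
lemma cns_inj[simp]: "cns x l = cns y m \<longleftrightarrow> x = y \<and> l = m"
  by (simp add: cns_def)

primrec encl :: "nat list \<Rightarrow> nat" where
  "encl [] = 0"
| "encl (x # xs) = cns x (encl xs)"

lemma encl_eq0[simp]: "encl xs = 0 \<longleftrightarrow> xs = []"
  by (cases xs) auto

lemma dropn_encl: "dropn a (encl xs) = encl (drop a xs)"
  unfolding dropn_def
proof (induction a arbitrary: xs)
  case 0 then show ?case by simp
next
  case (Suc a)
  then show ?case
  proof (cases xs)
    case Nil
    then have "(tln ^^ a) (tln 0) = 0"
    proof -
      have "tln 0 = 0" unfolding tln_def
        using prod_encode_inverse[of "(0,0)"] by (simp add: prod_encode_def p2_def)
      then show ?thesis using Suc.IH[of "[]"] by simp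
    qed
    then show ?thesis using Nil by (simp add: funpow_Suc_right del: funpow.simps)
  next
    case (Cons y ys)
    then show ?thesis using Suc.IH[of ys] by (simp add: funpow_Suc_right del: funpow.simps)
  qed
qed

definition Ev :: "nat \<Rightarrow> nat \<Rightarrow> nat \<Rightarrow> nat" where "Ev c xs K = pr 0 (pr c (pr xs K))"
definition Rt :: "nat \<Rightarrow> nat \<Rightarrow> nat" where "Rt v K = pr 1 (pr v K)"
definition FPrim :: "nat \<Rightarrow> nat \<Rightarrow> nat \<Rightarrow> nat" where "FPrim h n ys = pr 0 (pr h (pr n ys))"
definition FMu :: "nat \<Rightarrow> nat \<Rightarrow> nat \<Rightarrow> nat" where "FMu f m xs = pr 1 (pr f (pr m xs))"
definition FComp :: "nat \<Rightarrow> nat \<Rightarrow> nat \<Rightarrow> nat \<Rightarrow> nat" where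
  "FComp f rgs xs acc = pr 2 (pr f (pr rgs (pr xs acc)))"

primrec enc :: "recf \<Rightarrow> nat" where
  "enc Zero = pr 0 0"
| "enc Succ = pr 1 0"
| "enc (Proj i) = pr 2 i"
| "enc (Comp f gs) = pr 3 (pr (enc f) (encl (rev (map enc gs))))"
| "enc (Prim g h) = pr 4 (pr (enc g) (enc h))"
| "enc (Mu f) = pr 5 (enc f)"

definition step :: "nat \<Rightarrow> nat" where
"step z = (if p1 z = 0 then
   (let r = p2 z; c = p1 r; xs = p1 (p2 r); K = p2 (p2 r); op = p1 c; a = p2 c in
    if op = 0 then Rt 0 K
    else if op = 1 then (if xs = 0 then z else Rt (Suc (hdn xs)) K)
    else if op = 2 then (if dropn a xs = 0 then z else Rt (hdn (dropn a xs)) K)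
    else if op = 3 then (if p2 a = 0 then Ev (p1 a) 0 K
                         else Ev (hdn (p2 a)) xs (cns (FComp (p1 a) (tln (p2 a)) xs 0) K))
    else if op = 4 then (if xs = 0 then z
                         else if hdn xs = 0 then Ev (p1 a) (tln xs) K
                         else Ev c (cns (hdn xs - 1) (tln xs)) (cns (FPrim (p2 a) (hdn xs - 1) (tln xs)) K))
    else if op = 5 then Ev a (cns 0 xs) (cns (FMu a 0 xs) K)
    else z)
 else if p1 z = 1 then
   (let v = p1 (p2 z); K = p2 (p2 z) in
    if K = 0 then z else
    (let fr = hdn K; K' = tln K; ft = p1 fr; fa = p2 fr in
     if ft = 0 then Ev (p1 fa) (cns v (cns (p1 (p2 fa)) (p2 (p2 fa)))) K'
     else if ft = 1 then (if v = 0 then Rt (p1 (p2 fa)) K'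
                          else Ev (p1 fa) (cns (Suc (p1 (p2 fa))) (p2 (p2 fa)))
                                  (cns (FMu (p1 fa) (Suc (p1 (p2 fa))) (p2 (p2 fa))) K'))
     else if ft = 2 then (let f = p1 fa; rgs = p1 (p2 fa); xs = p1 (p2 (p2 fa));
                              acc = cns v (p2 (p2 (p2 fa))) in
                          if rgs = 0 then Ev f acc K' else Ev (hdn rgs) xs (cns (FComp f (tln rgs) xs acc) K'))
     else z))
 else z)"



lemmas stepdefs = step_def Let_def Ev_def Rt_def FPrim_def FMu_def FComp_def

lemma step_Zero: "step (Ev (enc Zero) xs K) = Rt 0 K"
  by (simp add: stepdefs)
lemma step_Succ: "step (Ev (enc Succ) (encl (x # xs)) K) = Rt (Suc x) K"
  by (simp add: stepdefs)
lemma step_Proj: "i < length xs \<Longrightarrow> step (Ev (enc (Proj i)) (encl xs) K) = Rt (xs ! i) K"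
  by (simp add: stepdefs dropn_encl Cons_nth_drop_Suc[symmetric])
lemma step_Comp_nil: "step (Ev (enc (Comp f [])) xs K) = Ev (enc f) 0 K"
  by (simp add: stepdefs)
lemma step_Comp: "rs = rev gs \<Longrightarrow> rs = r # rs' \<Longrightarrow>
   step (Ev (enc (Comp f gs)) xs K) = Ev (enc r) xs (cns (FComp (enc f) (encl (map enc rs')) xs 0) K)"
proof -
  assume "rs = rev gs" "rs = r # rs'"
  then have "rev (map enc gs) = enc r # map enc rs'" by (metis list.simps(9) rev_map)
  then show ?thesis by (simp add: stepdefs)
qed
lemma step_Prim0: "step (Ev (enc (Prim g h)) (encl (0 # xs)) K) = Ev (enc g) (encl xs) K"
  by (simp add: stepdefs)
lemma step_PrimS: "step (Ev (enc (Prim g h)) (encl (Suc n # xs)) K) =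
   Ev (enc (Prim g h)) (encl (n # xs)) (cns (FPrim (enc h) n (encl xs)) K)"
  by (simp add: stepdefs)
lemma step_Mu: "step (Ev (enc (Mu f)) xs K) = Ev (enc f) (cns 0 xs) (cns (FMu (enc f) 0 xs) K)"
  by (simp add: stepdefs)
lemma step_RPrim: "step (Rt v (cns (FPrim h n ys) K)) = Ev h (cns v (cns n ys)) K"
  by (simp add: stepdefs)
lemma step_RMu0: "step (Rt 0 (cns (FMu f m xs) K)) = Rt m K"
  by (simp add: stepdefs)
lemma step_RMuS: "step (Rt (Suc v) (cns (FMu f m xs) K)) = Ev f (cns (Suc m) xs) (cns (FMu f (Suc m) xs) K)"
  by (simp add: stepdefs)
lemma step_RComp: "step (Rt v (cns (FComp f rgs xs acc) K)) =
  (if rgs = 0 then Ev f (cns v acc) K else Ev (hdn rgs) xs (cns (FComp f (tln rgs) xs (cns v acc)) K))"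
  by (simp add: stepdefs)
lemma step_halt: "step (Rt v 0) = Rt v 0"
  by (simp add: stepdefs)



lemma computable_step: "computable step"
proof -
  have "computable (\<lambda>z. step z)"
    unfolding step_def Let_def Ev_def Rt_def FPrim_def FMu_def FComp_def cns_def hdn_def tln_def dropn_def
    by (intro cI)
  then show ?thesis by simp
qed



declare enc.simps[simp del] encl.simps[simp del]
lemma encl_Nil[simp]: "encl [] = 0" by (simp add: encl.simps)

definition reach :: "nat \<Rightarrow> nat \<Rightarrow> bool" where "reach a b \<longleftrightarrow> (\<exists>n. (step ^^ n) a = b)"

lemma reach_refl: "reach a a"
  unfolding reach_def by (rule exI[of _ 0]) simp

lemma reach_trans: "reach a b \<Longrightarrow> reach b c \<Longrightarrow> reach a c"
  unfolding reach_def by (metis funpow_add comp_apply)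

lemma reach_stepI: "step a = b \<Longrightarrow> reach b c \<Longrightarrow> reach a c"
  unfolding reach_def by (metis funpow_Suc_right comp_apply)

lemma compL:
  assumes "list_all2 (\<lambda>g y. \<forall>K. reach (Ev (enc g) X K) (Rt y K)) rs qs"
  shows "rs \<noteq> [] \<Longrightarrow> reach (Ev (enc (hd rs)) X (cns (FComp F (encl (map enc (tl rs))) X (encl acc)) K))
           (Ev F (encl (rev qs @ acc)) K)"
  using assms
proof (induction arbitrary: acc rule: list_all2_induct)
  case Nil then show ?case by simp
next
  case (Cons r rs q qs)
  have r1: "reach (Ev (enc r) X (cns (FComp F (encl (map enc rs)) X (encl acc)) K))
                  (Rt q (cns (FComp F (encl (map enc rs)) X (encl acc)) K))"
    using Cons.hyps(1) by blast
  show ?case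
  proof (cases "rs = []")
    case True
    then have "qs = []" using Cons.hyps(2) by simp
    then show ?thesis using True r1
      by simp (metis (no_types, lifting) encl.simps reach_refl reach_stepI reach_trans step_RComp)
  next
    case False
    have "reach (Rt q (cns (FComp F (encl (map enc rs)) X (encl acc)) K))
                (Ev F (encl (rev (q # qs) @ acc)) K)"
      using Cons.IH[OF False, of "q # acc"] False
      by (intro reach_stepI[OF step_RComp]) (cases rs; simp add: encl.simps)
    then show ?thesis using r1 reach_trans by simp
  qed
qed

lemma eval_complete: "eval c xs y \<Longrightarrow> \<forall>K. reach (Ev (enc c) (encl xs) K) (Rt y K)"
proof (induction rule: eval.induct)
  case (eval_Zero xs)
  then show ?case by (auto simp del: enc.simps encl.simps intro: reach_stepI[OF step_Zero] reach_refl)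
next
  case (eval_Succ x xs)
  then show ?case by (auto simp del: enc.simps encl.simps intro: reach_stepI[OF step_Succ] reach_refl)
next
  case (eval_Proj i xs)
  then show ?case by (auto simp del: enc.simps encl.simps intro: reach_stepI[OF step_Proj] reach_refl)
next
  case (eval_Comp xs gs ys f z)
  have la0: "list_all2 (\<lambda>g y. eval g xs y \<and> (\<forall>K. reach (Ev (enc g) (encl xs) K) (Rt y K))) gs ys"
    using eval_Comp by blast
  have IHf: "\<forall>K. reach (Ev (enc f) (encl ys) K) (Rt z K)" using eval_Comp by blast
  show ?case
  proof
    fix K
    show "reach (Ev (enc (Comp f gs)) (encl xs) K) (Rt z K)"
    proof (cases "gs = []")
      case True
      then have "ys = []" using la0 by simp
      then show ?thesis using True IHf
        by (metis encl.simps(1) reach_stepI step_Comp_nil)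
    next
      case False
      then obtain r rs' where rs: "rev gs = r # rs'" by (cases "rev gs") auto
      have la: "list_all2 (\<lambda>g y. \<forall>K. reach (Ev (enc g) (encl xs) K) (Rt y K)) (rev gs) (rev ys)"
      proof -
        have "list_all2 (\<lambda>g y. \<forall>K. reach (Ev (enc g) (encl xs) K) (Rt y K)) gs ys"
          using la0 by (rule list_all2_mono) simp
        then show ?thesis by (simp add: list_all2_rev)
      qed
      have "reach (Ev (enc r) (encl xs) (cns (FComp (enc f) (encl (map enc rs')) (encl xs) (encl [])) K))
                  (Ev (enc f) (encl (rev (rev ys) @ [])) K)"
        using compL[OF la, of "enc f" "[]" K] rs by simp
      then have "reach (Ev (enc (Comp f gs)) (encl xs) K) (Ev (enc f) (encl ys) K)"
        by (intro reach_stepI[OF step_Comp[OF refl rs]]) simp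
      then show ?thesis using IHf reach_trans by blast
    qed
  qed
next
  case (eval_Prim0 g xs z h)
  then show ?case by (auto intro: reach_stepI[OF step_Prim0])
next
  case (eval_PrimS g h n xs y z)
  show ?case
  proof
    fix K
    have "reach (Ev (enc (Prim g h)) (encl (n # xs)) (cns (FPrim (enc h) n (encl xs)) K))
             (Rt y (cns (FPrim (enc h) n (encl xs)) K))" using eval_PrimS.IH(1) by blast
    moreover have "reach (Rt y (cns (FPrim (enc h) n (encl xs)) K)) (Rt z K)"
      using eval_PrimS.IH(2) by (intro reach_stepI[OF step_RPrim]) (simp add: encl.simps)
    ultimately show "reach (Ev (enc (Prim g h)) (encl (Suc n # xs)) K) (Rt z K)"
      by (intro reach_stepI[OF step_PrimS]) (rule reach_trans)
  qed
next
  case (eval_Mu f n xs)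
  show ?case
  proof
    fix K
    have main: "d \<le> n \<Longrightarrow> reach (Ev (enc f) (encl ((n - d) # xs)) (cns (FMu (enc f) (n - d) (encl xs)) K)) (Rt n K)" for d
    proof (induction d)
      case 0
      have "reach (Ev (enc f) (encl (n # xs)) (cns (FMu (enc f) n (encl xs)) K)) (Rt 0 (cns (FMu (enc f) n (encl xs)) K))"
        using eval_Mu.IH(1) by blast
      moreover have "reach (Rt 0 (cns (FMu (enc f) n (encl xs)) K)) (Rt n K)"
        by (rule reach_stepI[OF step_RMu0 reach_refl])
      ultimately show ?case using reach_trans by simp
    next
      case (Suc d)
      define m where "m = n - Suc d"
      have mn: "m < n" "Suc m = n - d" using Suc.prems unfolding m_def by auto
      obtain y where y: "\<forall>K. reach (Ev (enc f) (encl (m # xs)) K) (Rt (Suc y) K)"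
        using eval_Mu.IH(2) mn(1) by blast
      have "reach (Rt (Suc y) (cns (FMu (enc f) m (encl xs)) K)) (Rt n K)"
        using Suc.IH Suc.prems mn(2) by (intro reach_stepI[OF step_RMuS]) (simp add: encl.simps)
      then show ?case using y reach_trans unfolding m_def[symmetric] by blast
    qed
    show "reach (Ev (enc (Mu f)) (encl xs) K) (Rt n K)"
      using main[of n] by (intro reach_stepI[OF step_Mu]) (simp add: encl.simps)
  qed
qed

lemma halt_stable: "(step ^^ n) z = Rt y 0 \<Longrightarrow> n \<le> m \<Longrightarrow> (step ^^ m) z = Rt y 0"
proof (induction m)
  case 0 then show ?case by simp
next
  case (Suc m)
  then show ?case
    by (cases "n = Suc m") (auto simp: step_halt)
qed

lemma halt_unique: "(step ^^ n) z = Rt y 0 \<Longrightarrow> (step ^^ m) z = Rt y' 0 \<Longrightarrow> y = y'"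
  by (metis halt_stable nat_le_linear Rt_def pr_inj)

lemma comp_sim: "eval c [x] y \<Longrightarrow> \<exists>n. (step ^^ n) (Ev (enc c) (cns x 0) 0) = Rt y 0"
  using eval_complete[of c "[x]" y] unfolding reach_def by (simp add: encl.simps)


definition isP :: "(nat \<Rightarrow> nat) \<Rightarrow> nat \<Rightarrow> bool" where
  "isP f x \<longleftrightarrow> f x = x \<and> card (f -` {x}) = 1"
definition isR :: "(nat \<Rightarrow> nat) \<Rightarrow> nat \<Rightarrow> bool" where
  "isR f x \<longleftrightarrow> f x = x \<and> card (f -` {x}) = 2"

definition good :: "(nat \<Rightarrow> nat) \<Rightarrow> bool" where
  "good f \<longleftrightarrow> is_21_1 f \<and> (\<forall>x. \<exists>n. f ((f ^^ n) x) = (f ^^ n) x)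
     \<and> (\<forall>x. f x \<noteq> x \<longrightarrow> card (f -` {x}) = 1)
     \<and> infinite {x. isP f x} \<and> infinite {x. isR f x}"

definition pre :: "(nat \<Rightarrow> nat) \<Rightarrow> nat \<Rightarrow> nat" where
  "pre f y = (THE z. f z = y \<and> z \<noteq> y)"

definition up :: "(nat \<Rightarrow> nat) \<Rightarrow> nat \<Rightarrow> nat \<Rightarrow> nat" where
  "up f r d = (pre f ^^ d) r"

definition depth :: "(nat \<Rightarrow> nat) \<Rightarrow> nat \<Rightarrow> nat" where
  "depth f x = (LEAST n. f ((f ^^ n) x) = (f ^^ n) x)"

definition root :: "(nat \<Rightarrow> nat) \<Rightarrow> nat \<Rightarrow> nat" where
  "root f x = (f ^^ depth f x) x"

lemma isR_not_isP: "isR f x \<Longrightarrow> \<not> isP f x"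
  unfolding isR_def isP_def by simp

lemma pre_ex1:
  assumes g: "good f" and np: "\<not> isP f y"
  shows "\<exists>!z. f z = y \<and> z \<noteq> y"
proof (cases "f y = y")
  case True
  have c: "card (f -` {y}) \<in> {1, 2}" using g unfolding good_def is_21_1_def by blast
  then have "card (f -` {y}) = 2" using np True unfolding isP_def by auto
  then obtain a b where ab: "f -` {y} = {a, b}" "a \<noteq> b" by (auto simp: card_2_iff)
  have mem: "\<And>z. f z = y \<longleftrightarrow> z = a \<or> z = b" using ab(1) by (metis insert_iff singletonD vimage_singleton_eq)
  have "y = a \<or> y = b" using mem True by blast
  then show ?thesis
  proof
    assume "y = a" then show ?thesis using mem ab(2) by (intro ex1I[of _ b]) auto
  next
    assume "y = b" then show ?thesis using mem ab(2) by (intro ex1I[of _ a]) auto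
  qed
next
  case False
  have "card (f -` {y}) = 1" using g False unfolding good_def by blast
  then obtain a where a: "f -` {y} = {a}" by (auto simp: card_1_singleton_iff)
  then have "f a = y" by auto
  moreover have "a \<noteq> y" using False \<open>f a = y\<close> by auto
  ultimately show ?thesis using a by (metis singletonD vimage_singleton_eq)
qed

lemma pre_spec:
  assumes "good f" "\<not> isP f y"
  shows "f (pre f y) = y" "pre f y \<noteq> y"
  using theI'[OF pre_ex1[OF assms]] unfolding pre_def by auto

lemma pre_unique:
  assumes "good f" "\<not> isP f y" "f z = y" "z \<noteq> y"
  shows "z = pre f y"
proof -
  obtain w where w: "\<And>z. f z = y \<and> z \<noteq> y \<Longrightarrow> z = w"
    using pre_ex1[OF assms(1,2)] unfolding Ex1_def by blast
  show ?thesis using w[of z] w[of "pre f y"] pre_spec[OF assms(1,2)] assms(3,4) by simp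
qed

lemma pre_not_isP:
  assumes "good f" "\<not> isP f y" shows "\<not> isP f (pre f y)"
  using pre_spec[OF assms] unfolding isP_def by metis

lemma up_0[simp]: "up f r 0 = r" and up_Suc: "up f r (Suc d) = pre f (up f r d)"
  unfolding up_def by simp_all

lemma up_not_isP:
  assumes "good f" "\<not> isP f r" shows "\<not> isP f (up f r d)"
proof (induction d)
  case 0 then show ?case using assms(2) by simp
next
  case (Suc d) then show ?case unfolding up_Suc by (rule pre_not_isP[OF assms(1)])
qed

lemma up_f:
  assumes "good f" "\<not> isP f r"
  shows "f (up f r (Suc d)) = up f r d" "f (up f r (Suc d)) \<noteq> up f r (Suc d)"
  using pre_spec[OF assms(1) up_not_isP[OF assms, of d]] by (auto simp: up_Suc)

lemma up_funpow:
  assumes "good f" "\<not> isP f r" "n \<le> d"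
  shows "(f ^^ n) (up f r d) = up f r (d - n)"
  using assms(3)
proof (induction n)
  case 0 then show ?case by simp
next
  case (Suc n)
  have e: "d - n = Suc (d - Suc n)" using Suc.prems by arith
  have "(f ^^ Suc n) (up f r d) = f ((f ^^ n) (up f r d))" by simp
  also have "\<dots> = f (up f r (d - n))" using Suc by simp
  also have "\<dots> = up f r (d - Suc n)" unfolding e by (rule up_f(1)[OF assms(1,2)])
  finally show ?case .
qed

lemma depth_up:
  assumes "good f" "isR f r"
  shows "depth f (up f r d) = d" "root f (up f r d) = r"
proof -
  have np: "\<not> isP f r" using assms(2) by (rule isR_not_isP)
  have fix_d: "f ((f ^^ d) (up f r d)) = (f ^^ d) (up f r d)"
    using up_funpow[OF assms(1) np, of d d] assms(2) unfolding isR_def by simp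
  have nfix: "f ((f ^^ n) (up f r d)) \<noteq> (f ^^ n) (up f r d)" if "n < d" for n
  proof -
    define k where "k = d - Suc n"
    have k: "d - n = Suc k" using that unfolding k_def by arith
    have "(f ^^ n) (up f r d) = up f r (Suc k)" using up_funpow[OF assms(1) np, of n d] that k by simp
    then show ?thesis using up_f(2)[OF assms(1) np, of k] by simp
  qed
  show "depth f (up f r d) = d" unfolding depth_def
  proof (rule Least_equality)
    show "f ((f ^^ d) (up f r d)) = (f ^^ d) (up f r d)" by (rule fix_d)
    show "d \<le> y" if "f ((f ^^ y) (up f r d)) = (f ^^ y) (up f r d)" for y
      using nfix[of y] that by (cases "y < d") auto
  qed
  then show "root f (up f r d) = r" unfolding root_def
    using up_funpow[OF assms(1) np, of d d] by simp
qed

lemma decompose_aux: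
  assumes g: "good f"
  shows "f ((f ^^ d) x) = (f ^^ d) x \<Longrightarrow> (\<forall>m<d. f ((f ^^ m) x) \<noteq> (f ^^ m) x) \<Longrightarrow> \<not> isP f x
    \<Longrightarrow> \<not> isP f ((f ^^ d) x) \<and> x = up f ((f ^^ d) x) d"
proof (induction d arbitrary: x)
  case 0 then show ?case by simp
next
  case (Suc d)
  let ?y = "f x"
  have fx: "f x \<noteq> x" using Suc.prems(2)[rule_format, of 0] by simp
  have eq: "(f ^^ Suc d) x = (f ^^ d) ?y" by (simp add: funpow_Suc_right del: funpow.simps)
  have npy: "\<not> isP f ?y"
  proof
    assume "isP f ?y"
    then have "card (f -` {?y}) = 1" unfolding isP_def by simp
    moreover have "x \<in> f -` {?y}" "?y \<in> f -` {?y}" using \<open>isP f ?y\<close> unfolding isP_def by auto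
    ultimately show False using fx
    proof -
      obtain a where a: "f -` {?y} = {a}" using \<open>card (f -` {?y}) = 1\<close> by (auto simp: card_1_singleton_iff)
      have "x \<in> {a}" unfolding a[symmetric] by fact
      moreover have "?y \<in> {a}" unfolding a[symmetric] by fact
      ultimately show False using fx by simp
    qed
  qed
  have "\<forall>m<d. f ((f ^^ m) ?y) \<noteq> (f ^^ m) ?y"
  proof (intro allI impI)
    fix m assume "m < d"
    then have "f ((f ^^ Suc m) x) \<noteq> (f ^^ Suc m) x" using Suc.prems(2) by blast
    then show "f ((f ^^ m) ?y) \<noteq> (f ^^ m) ?y" by (simp add: funpow_Suc_right del: funpow.simps)
  qed
  then have IH: "\<not> isP f ((f ^^ d) ?y) \<and> ?y = up f ((f ^^ d) ?y) d"
    using Suc.IH[of ?y] Suc.prems(1) eq npy by simp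
  have "x = pre f ?y" using pre_unique[of f "f x" x, OF g npy refl fx[symmetric]] .
  then show ?case using IH eq by (simp add: up_Suc)
qed

lemma decompose:
  assumes g: "good f" and np: "\<not> isP f x"
  shows "isR f (root f x)" "x = up f (root f x) (depth f x)"
proof -
  have ex: "\<exists>n. f ((f ^^ n) x) = (f ^^ n) x" using g unfolding good_def by blast
  have a: "f ((f ^^ depth f x) x) = (f ^^ depth f x) x"
    unfolding depth_def by (rule LeastI_ex[OF ex])
  have b: "\<forall>m<depth f x. f ((f ^^ m) x) \<noteq> (f ^^ m) x"
    unfolding depth_def using not_less_Least by blast
  have r: "\<not> isP f (root f x) \<and> x = up f (root f x) (depth f x)"
    using decompose_aux[OF g a b np] unfolding root_def by simp
  then show "x = up f (root f x) (depth f x)" by simp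
  have "card (f -` {root f x}) \<in> {1, 2}" using g unfolding good_def is_21_1_def by blast
  then show "isR f (root f x)" using r a unfolding isR_def isP_def root_def by auto
qed

definition hmap where
  "hmap f g pP pR x = (if isP f x then pP x else up g (pR (root f x)) (depth f x))"

lemma hmap_back:
  assumes gf: "good f" and gg: "good g"
    and P: "\<And>x. isP f x \<Longrightarrow> isP g (pP x) \<and> pP' (pP x) = x"
    and R: "\<And>x. isR f x \<Longrightarrow> isR g (pR x) \<and> pR' (pR x) = x"
  shows "hmap g f pP' pR' (hmap f g pP pR x) = x"
proof (cases "isP f x")
  case True then show ?thesis using P unfolding hmap_def by simp
next
  case False
  note d = decompose[OF gf False]
  let ?r = "pR (root f x)"
  have rR: "isR g ?r" using R d(1) by blast
  have np: "\<not> isP g (up g ?r (depth f x))" using up_not_isP[OF gg isR_not_isP[OF rR]] .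
  show ?thesis using False np depth_up[OF gg rR, of "depth f x"] R[OF d(1)] d(2)
    unfolding hmap_def by simp
qed

lemma hmap_comm:
  assumes gf: "good f" and gg: "good g"
    and P: "\<And>x. isP f x \<Longrightarrow> isP g (pP x)"
    and R: "\<And>x. isR f x \<Longrightarrow> isR g (pR x)"
  shows "hmap f g pP pR (f x) = g (hmap f g pP pR x)"
proof (cases "isP f x")
  case True
  then show ?thesis using P[OF True] unfolding hmap_def isP_def by simp
next
  case False
  note d = decompose[OF gf False]
  let ?r = "root f x" and ?d = "depth f x"
  have rR: "isR g (pR ?r)" using R d(1) by blast
  show ?thesis
  proof (cases ?d)
    case 0
    then have "x = ?r" using d(2) by simp
    then have "f x = x" using d(1) unfolding isR_def by simp
    then show ?thesis using False 0 rR unfolding hmap_def isR_def by simp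
  next
    case (Suc d')
    have fx: "f x = up f ?r d'" using d(2) Suc up_f(1)[OF gf isR_not_isP[OF d(1)]] by metis
    have np': "\<not> isP f (f x)" using fx up_not_isP[OF gf isR_not_isP[OF d(1)]] by simp
    have "hmap f g pP pR (f x) = up g (pR ?r) d'"
      using np' fx depth_up[OF gf d(1), of d'] unfolding hmap_def by simp
    also have "\<dots> = g (up g (pR ?r) (Suc d'))" using up_f(1)[OF gg isR_not_isP[OF rR]] by simp
    also have "\<dots> = g (hmap f g pP pR x)" using False Suc unfolding hmap_def by simp
    finally show ?thesis .
  qed
qed

lemma inf_bij:
  fixes A B :: "nat set"
  assumes "infinite A" "infinite B"
  shows "\<exists>p. bij_betw p A B"
proof -
  have a: "bij_betw (the_inv_into UNIV (enumerate A)) A UNIV"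
    by (rule bij_betw_the_inv_into[OF bij_enumerate[OF assms(1)]])
  have b: "bij_betw (enumerate B) UNIV B" by (rule bij_enumerate[OF assms(2)])
  show ?thesis using bij_betw_trans[OF a b] by blast
qed

theorem good_iso:
  assumes gf: "good f" and gg: "good g"
  shows "\<exists>h. struct_iso f g h"
proof -
  have i: "infinite {x. isP f x}" "infinite {x. isP g x}" "infinite {x. isR f x}" "infinite {x. isR g x}"
    using gf gg unfolding good_def by simp_all
  obtain pP where pP: "bij_betw pP {x. isP f x} {x. isP g x}"
    using inf_bij[OF i(1,2)] by blast
  obtain pR where pR: "bij_betw pR {x. isR f x} {x. isR g x}"
    using inf_bij[OF i(3,4)] by blast
  define pP' where "pP' = the_inv_into {x. isP f x} pP"
  define pR' where "pR' = the_inv_into {x. isR f x} pR"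
  have pP'b: "bij_betw pP' {x. isP g x} {x. isP f x}" unfolding pP'_def by (rule bij_betw_the_inv_into[OF pP])
  have pR'b: "bij_betw pR' {x. isR g x} {x. isR f x}" unfolding pR'_def by (rule bij_betw_the_inv_into[OF pR])
  have P1: "isP g (pP x) \<and> pP' (pP x) = x" if "isP f x" for x
  proof
    show "isP g (pP x)" using bij_betw_apply[OF pP] that by simp
    show "pP' (pP x) = x" unfolding pP'_def
      by (rule the_inv_into_f_f[OF bij_betw_imp_inj_on[OF pP]]) (use that in simp)
  qed
  have R1: "isR g (pR x) \<and> pR' (pR x) = x" if "isR f x" for x
  proof
    show "isR g (pR x)" using bij_betw_apply[OF pR] that by simp
    show "pR' (pR x) = x" unfolding pR'_def
      by (rule the_inv_into_f_f[OF bij_betw_imp_inj_on[OF pR]]) (use that in simp)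
  qed
  have P2: "isP f (pP' x) \<and> pP (pP' x) = x" if "isP g x" for x
  proof
    show "isP f (pP' x)" using bij_betw_apply[OF pP'b] that by simp
    show "pP (pP' x) = x" unfolding pP'_def
      by (rule f_the_inv_into_f[OF bij_betw_imp_inj_on[OF pP]]) (use that bij_betw_imp_surj_on[OF pP] in simp)
  qed
  have R2: "isR f (pR' x) \<and> pR (pR' x) = x" if "isR g x" for x
  proof
    show "isR f (pR' x)" using bij_betw_apply[OF pR'b] that by simp
    show "pR (pR' x) = x" unfolding pR'_def
      by (rule f_the_inv_into_f[OF bij_betw_imp_inj_on[OF pR]]) (use that bij_betw_imp_surj_on[OF pR] in simp)
  qed
  let ?h = "hmap f g pP pR" and ?h' = "hmap g f pP' pR'"
  have i1: "\<And>x. ?h' (?h x) = x" by (rule hmap_back[OF gf gg P1 R1])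
  have i2: "\<And>x. ?h (?h' x) = x" by (rule hmap_back[OF gg gf P2 R2])
  have "inj ?h" by (rule inj_on_inverseI[of _ ?h']) (rule i1)
  moreover have "surj ?h" by (rule surjI[of ?h ?h']) (rule i2)
  ultimately have "bij ?h" unfolding bij_def by blast
  moreover have "\<forall>x. ?h (f x) = g (?h x)"
  proof
    fix x show "?h (f x) = g (?h x)" by (rule hmap_comm[OF gf gg]) (use P1 R1 in simp_all)
  qed
  ultimately show ?thesis unfolding struct_iso_def by blast
qed

lemma iso_isP:
  assumes "struct_iso f g h" "isP f x" shows "isP g (h x)"
proof -
  have b: "bij h" and c: "\<forall>x. h (f x) = g (h x)" using assms(1) unfolding struct_iso_def by auto
  have "g -` {h x} = h ` (f -` {x})"
  proof
    show "g -` {h x} \<subseteq> h ` (f -` {x})"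
    proof
      fix y assume "y \<in> g -` {h x}"
      have sj: "surj h" and ij: "inj h" using b by (simp_all add: bij_def)
      obtain z where z: "y = h z" using surjD[OF sj, of y] by blast
      then have "h (f z) = h x" using c[rule_format, of z] \<open>y \<in> g -` {h x}\<close> by simp
      then have "f z = x" using injD[OF ij] by blast
      then show "y \<in> h ` (f -` {x})" using z by auto
    qed
    show "h ` (f -` {x}) \<subseteq> g -` {h x}"
    proof
      fix y assume "y \<in> h ` (f -` {x})"
      then obtain z where "z \<in> f -` {x}" "y = h z" by blast
      then show "y \<in> g -` {h x}" using c[rule_format, of z] by simp
    qed
  qed
  moreover have "card (h ` (f -` {x})) = card (f -` {x})"
  proof -
    have "inj h" using b by (simp add: bij_def)
    then show ?thesis by (rule card_image[OF inj_on_subset[OF _ subset_UNIV]])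
  qed
  ultimately have "card (g -` {h x}) = 1" using assms(2) unfolding isP_def by simp
  moreover have "g (h x) = h x" using c[rule_format, of x] assms(2) unfolding isP_def by simp
  ultimately show ?thesis unfolding isP_def by simp
qed


definition Ec :: "nat \<Rightarrow> nat \<Rightarrow> nat" where "Ec j k = 4 * pr j k + 1"
definition Sc :: "nat \<Rightarrow> nat \<Rightarrow> nat" where "Sc j k = 4 * pr j k + 3"

definition shape :: "(nat \<Rightarrow> nat \<Rightarrow> bool) \<Rightarrow> nat \<Rightarrow> nat" where
  "shape ev x = (if even x then x else
     (let y = x div 2; w = y div 2; j = p1 w; k = p2 w in
      if even y then (if k = 0 then x else if ev j (k - 1) then Ec j (k - 1) else Sc j (k - 1))
      else (if \<not> ev j k then Ec j k else if \<not> ev j (k - 1) then 2 * j else Sc j (k - 1))))"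

lemma Ec_inj[simp]: "Ec j k = Ec j' k' \<longleftrightarrow> j = j' \<and> k = k'"
  unfolding Ec_def by simp
lemma Sc_inj[simp]: "Sc j k = Sc j' k' \<longleftrightarrow> j = j' \<and> k = k'"
  unfolding Sc_def by simp
lemma Ec_Sc[simp]: "Ec j k \<noteq> Sc j' k'" "Sc j' k' \<noteq> Ec j k"
  unfolding Ec_def Sc_def by presburger+
lemma Ec_ev[simp]: "Ec j k \<noteq> 2 * i" "2 * i \<noteq> Ec j k"
  unfolding Ec_def by presburger+
lemma Sc_ev[simp]: "Sc j k \<noteq> 2 * i" "2 * i \<noteq> Sc j k"
  unfolding Sc_def by presburger+

lemma classify: "(\<exists>j. x = 2 * j) \<or> (\<exists>j k. x = Ec j k) \<or> (\<exists>j k. x = Sc j k)"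
proof (cases "even x")
  case True then show ?thesis by auto
next
  case False
  define w where "w = x div 2 div 2"
  have w: "pr (p1 w) (p2 w) = w" by simp
  show ?thesis
  proof (cases "even (x div 2)")
    case True
    then have "x = 4 * w + 1" using False unfolding w_def by presburger
    then have "x = Ec (p1 w) (p2 w)" unfolding Ec_def by simp
    then show ?thesis by blast
  next
    case False2: False
    then have "x = 4 * w + 3" using False unfolding w_def by presburger
    then have "x = Sc (p1 w) (p2 w)" unfolding Sc_def by simp
    then show ?thesis by blast
  qed
qed

lemma shape_even[simp]: "shape ev (2 * j) = 2 * j"
  unfolding shape_def by simp

lemma Ec_div: "Ec j k div 2 = 2 * pr j k" "odd (Ec j k)"
  unfolding Ec_def by presburger+
lemma Sc_div: "Sc j k div 2 = 2 * pr j k + 1" "odd (Sc j k)"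
  unfolding Sc_def by presburger+

lemma shape_E0[simp]: "shape ev (Ec j 0) = Ec j 0"
  unfolding shape_def Let_def using Ec_div[of j 0] by simp
lemma shape_ES[simp]: "shape ev (Ec j (Suc k)) = (if ev j k then Ec j k else Sc j k)"
  unfolding shape_def Let_def using Ec_div[of j "Suc k"] by simp
lemma shape_S[simp]: "shape ev (Sc j k) = (if \<not> ev j k then Ec j k else if \<not> ev j (k - 1) then 2 * j else Sc j (k - 1))"
  unfolding shape_def Let_def using Sc_div[of j k] by simp

definition W :: "(nat \<Rightarrow> nat \<Rightarrow> bool) \<Rightarrow> bool" where
  "W ev \<longleftrightarrow> (\<forall>j. \<not> ev j 0) \<and> (\<forall>j k k'. ev j k \<longrightarrow> k \<le> k' \<longrightarrow> ev j k')"

lemma W0: "W ev \<Longrightarrow> \<not> ev j 0" unfolding W_def by blast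
lemma Wm: "W ev \<Longrightarrow> ev j k \<Longrightarrow> k \<le> k' \<Longrightarrow> ev j k'" unfolding W_def by blast

lemma pre_E0:
  assumes "W ev" shows "shape ev -` {Ec j 0} = {Ec j 0, Sc j 0}"
proof (rule set_eqI)
  fix y show "y \<in> shape ev -` {Ec j 0} \<longleftrightarrow> y \<in> {Ec j 0, Sc j 0}"
    using classify[of y] W0[OF assms]
  proof (elim disjE exE)
    fix i assume "y = 2 * i" then show ?thesis by simp
  next
    fix i k assume y: "y = Ec i k"
    then show ?thesis using W0[OF assms] by (cases k) (auto intro: gr0I)
  next
    fix i k assume y: "y = Sc i k"
    then show ?thesis using W0[OF assms] by (cases k) auto
  qed
qed

lemma pre_ES:
  assumes "W ev" shows "shape ev -` {Ec j (Suc k)} = (if ev j (Suc k) then {Ec j (Suc (Suc k))} else {Sc j (Suc k)})"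
proof (rule set_eqI)
  fix y show "y \<in> shape ev -` {Ec j (Suc k)} \<longleftrightarrow> y \<in> (if ev j (Suc k) then {Ec j (Suc (Suc k))} else {Sc j (Suc k)})"
    using classify[of y]
  proof (elim disjE exE)
    fix i assume "y = 2 * i" then show ?thesis by simp
  next
    fix i k' assume y: "y = Ec i k'"
    show ?thesis
    proof (cases k')
      case 0 then show ?thesis using y by simp
    next
      case (Suc m)
      have "y \<in> shape ev -` {Ec j (Suc k)} \<longleftrightarrow> ev i m \<and> i = j \<and> m = Suc k" using y Suc by auto
      moreover have "y \<in> (if ev j (Suc k) then {Ec j (Suc (Suc k))} else {Sc j (Suc k)}) \<longleftrightarrow> ev j (Suc k) \<and> i = j \<and> m = Suc k"
        using y Suc by auto
      ultimately show ?thesis by auto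
    qed
  next
    fix i k' assume y: "y = Sc i k'"
    then show ?thesis by auto
  qed
qed

lemma pre_S:
  assumes "W ev" shows "shape ev -` {Sc j k} = (if ev j k then {Sc j (Suc k)} else {Ec j (Suc k)})"
proof (rule set_eqI)
  fix y show "y \<in> shape ev -` {Sc j k} \<longleftrightarrow> y \<in> (if ev j k then {Sc j (Suc k)} else {Ec j (Suc k)})"
    using classify[of y]
  proof (elim disjE exE)
    fix i assume "y = 2 * i" then show ?thesis by simp
  next
    fix i k' assume y: "y = Ec i k'"
    then show ?thesis by (cases k') auto
  next
    fix i k' assume y: "y = Sc i k'"
    show ?thesis
    proof (cases k')
      case 0 then show ?thesis using y W0[OF assms] by auto
    next
      case (Suc k'')
      have "ev j (Suc k) \<and> ev j k \<longleftrightarrow> ev j k" using Wm[OF assms, of j k "Suc k"] by auto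
      then show ?thesis using y Suc by auto
    qed
  qed
qed

lemma pre_even:
  assumes "W ev"
  shows "shape ev -` {2 * j} = insert (2 * j) {Sc j k | k. ev j k \<and> \<not> ev j (k - 1)}"
proof (rule set_eqI)
  fix y show "y \<in> shape ev -` {2 * j} \<longleftrightarrow> y \<in> insert (2 * j) {Sc j k | k. ev j k \<and> \<not> ev j (k - 1)}"
    using classify[of y]
  proof (elim disjE exE)
    fix i assume "y = 2 * i" then show ?thesis by auto
  next
    fix i k' assume y: "y = Ec i k'"
    then show ?thesis by (cases k') auto
  next
    fix i k' assume y: "y = Sc i k'"
    then show ?thesis by auto
  qed
qed

lemma first_ev:
  assumes "W ev" "ev j k"
  shows "{Sc j k | k. ev j k \<and> \<not> ev j (k - 1)} = {Sc j (LEAST k. ev j k)}"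
proof -
  let ?s = "LEAST k. ev j k"
  have s: "ev j ?s" using LeastI[of "ev j", OF assms(2)] .
  have s0: "?s \<noteq> 0" using s W0[OF assms(1)] by metis
  have s1: "\<not> ev j (?s - 1)" using s0 not_less_Least[of "?s - 1" "ev j"] by simp
  have u: "k = ?s" if "ev j k" "\<not> ev j (k - 1)" for k
  proof (rule ccontr)
    assume ne: "k \<noteq> ?s"
    have "?s \<le> k" using Least_le[of "ev j", OF that(1)] .
    then have "?s \<le> k - 1" using ne by arith
    then show False using Wm[OF assms(1) s] that(2) by blast
  qed
  show ?thesis using s s1 u by blast
qed

lemma card_pre_even:
  assumes "W ev"
  shows "card (shape ev -` {2 * j}) = (if \<exists>k. ev j k then 2 else 1)"
proof (cases "\<exists>k. ev j k")
  case True
  then obtain k where "ev j k" by blast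
  then show ?thesis using pre_even[OF assms] first_ev[OF assms] True by simp
next
  case False
  then have "{Sc j k | k. ev j k \<and> \<not> ev j (k - 1)} = {}" by blast
  then show ?thesis using pre_even[OF assms] False by simp
qed

lemma shape_21: assumes "W ev" shows "is_21_1 (shape ev)"
  unfolding is_21_1_def
proof
  fix a show "card (shape ev -` {a}) \<in> {1, 2}"
    using classify[of a]
  proof (elim disjE exE)
    fix i assume "a = 2 * i" then show ?thesis using card_pre_even[OF assms] by simp
  next
    fix i k assume "a = Ec i k" then show ?thesis using pre_E0[OF assms] pre_ES[OF assms] by (cases k) auto
  next
    fix i k assume "a = Sc i k" then show ?thesis using pre_S[OF assms] by auto
  qed
qed

lemma shape_nonfixed: assumes "W ev" "shape ev x \<noteq> x" shows "card (shape ev -` {x}) = 1"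
  using classify[of x]
proof (elim disjE exE)
  fix i assume "x = 2 * i" then show ?thesis using assms by simp
next
  fix i k assume "x = Ec i k" then show ?thesis using assms pre_ES[OF assms(1)] by (cases k) auto
next
  fix i k assume "x = Sc i k" then show ?thesis using pre_S[OF assms(1)] by auto
qed

lemma isP_shape: assumes "W ev" shows "isP (shape ev) x \<longleftrightarrow> (\<exists>j. x = 2 * j \<and> \<not> (\<exists>k. ev j k))"
  using classify[of x]
proof (elim disjE exE)
  fix i assume "x = 2 * i" then show ?thesis using card_pre_even[OF assms] unfolding isP_def by auto
next
  fix i k assume "x = Ec i k" then show ?thesis using pre_E0[OF assms] unfolding isP_def by (cases k) auto
next
  fix i k assume x: "x = Sc i k"
  have "shape ev x \<noteq> x" using x W0[OF assms] by (cases k) auto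
  then show ?thesis using x unfolding isP_def by auto
qed

lemma isR_E0: assumes "W ev" shows "isR (shape ev) (Ec j 0)"
  using pre_E0[OF assms] unfolding isR_def by simp

lemma fix_funpow: "f a = a \<Longrightarrow> (f ^^ n) a = a"
  by (induction n) auto

lemma shape_reach:
  assumes "W ev"
  shows "(\<exists>n. shape ev ((shape ev ^^ n) (Ec j k)) = (shape ev ^^ n) (Ec j k)) \<and>
         (\<exists>n. shape ev ((shape ev ^^ n) (Sc j k)) = (shape ev ^^ n) (Sc j k))"
proof (induction k)
  case 0
  have a: "shape ev ((shape ev ^^ 0) (Ec j 0)) = (shape ev ^^ 0) (Ec j 0)" by simp
  have "shape ev ((shape ev ^^ 1) (Sc j 0)) = (shape ev ^^ 1) (Sc j 0)" using W0[OF assms] by simp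
  then show ?case using a by blast
next
  case (Suc k)
  let ?f = "shape ev"
  have stepE: "\<exists>n. ?f ((?f ^^ n) x) = (?f ^^ n) x" if h: "\<exists>n. ?f ((?f ^^ n) (?f x)) = (?f ^^ n) (?f x)" for x
  proof -
    obtain n where "?f ((?f ^^ n) (?f x)) = (?f ^^ n) (?f x)" using h by blast
    then have "?f ((?f ^^ Suc n) x) = (?f ^^ Suc n) x" by (simp add: funpow_Suc_right del: funpow.simps)
    then show ?thesis by blast
  qed
  have E: "\<exists>n. ?f ((?f ^^ n) (Ec j (Suc k))) = (?f ^^ n) (Ec j (Suc k))"
    by (rule stepE) (use Suc.IH in \<open>cases "ev j k"; simp\<close>)
  have S: "\<exists>n. ?f ((?f ^^ n) (Sc j (Suc k))) = (?f ^^ n) (Sc j (Suc k))"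
  proof (rule stepE)
    show "\<exists>n. ?f ((?f ^^ n) (?f (Sc j (Suc k)))) = (?f ^^ n) (?f (Sc j (Suc k)))"
    proof (cases "ev j (Suc k)")
      case False then show ?thesis using E by simp
    next
      case True
      show ?thesis
      proof (cases "ev j k")
        case True2: True
        then show ?thesis using True Suc.IH by simp
      next
        case False
        then have "?f (Sc j (Suc k)) = 2 * j" using True by simp
        then show ?thesis by (intro exI[of _ 0]) simp
      qed
    qed
  qed
  show ?case using E S by blast
qed

lemma shape_reach_all:
  assumes "W ev" shows "\<exists>n. shape ev ((shape ev ^^ n) x) = (shape ev ^^ n) x"
  using classify[of x]
proof (elim disjE exE)
  fix i assume "x = 2 * i" then show ?thesis by (intro exI[of _ 0]) simp
next
  fix i k assume "x = Ec i k" then show ?thesis using shape_reach[OF assms] by blast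
next
  fix i k assume "x = Sc i k" then show ?thesis using shape_reach[OF assms] by blast
qed

lemma shape_good:
  assumes "W ev" "infinite {j. \<not> (\<exists>k. ev j k)}"
  shows "good (shape ev)"
  unfolding good_def
proof (intro conjI)
  show "is_21_1 (shape ev)" by (rule shape_21[OF assms(1)])
  show "\<forall>x. \<exists>n. shape ev ((shape ev ^^ n) x) = (shape ev ^^ n) x"
  proof
    fix x show "\<exists>n. shape ev ((shape ev ^^ n) x) = (shape ev ^^ n) x"
      by (rule shape_reach_all[OF assms(1)])
  qed
  show "\<forall>x. shape ev x \<noteq> x \<longrightarrow> card (shape ev -` {x}) = 1"
    using shape_nonfixed[OF assms(1)] by blast
  have "{x. isP (shape ev) x} = (\<lambda>j. 2 * j) ` {j. \<not> (\<exists>k. ev j k)}"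
    using isP_shape[OF assms(1)] by auto
  moreover have "inj (\<lambda>j::nat. 2 * j)" by (rule injI) simp
  ultimately show "infinite {x. isP (shape ev) x}"
    using assms(2) by (simp add: finite_image_iff inj_on_subset)
  have "range (\<lambda>j. Ec j 0) \<subseteq> {x. isR (shape ev) x}" using isR_E0[OF assms(1)] by auto
  moreover have "inj (\<lambda>j. Ec j 0)" by (rule injI) simp
  ultimately show "infinite {x. isR (shape ev) x}"
    by (meson finite_subset infinite_UNIV_nat finite_imageD)
qed

lemma shape_noZ:
  assumes "W ev" shows "no_Z_chains (shape ev)"
  unfolding no_Z_chains_def
proof
  fix x
  have "\<exists>n. shape ev ((shape ev ^^ n) x) = (shape ev ^^ n) x"
    by (rule shape_reach_all[OF assms])
  then obtain n where n: "shape ev ((shape ev ^^ n) x) = (shape ev ^^ n) x" by blast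
  have "(shape ev ^^ n) x \<in> orbit (shape ev) x" unfolding orbit_def
    by (rule CollectI, rule exI[of _ n], rule exI[of _ 0]) simp
  moreover have "cyclic (shape ev) ((shape ev ^^ n) x)" unfolding cyclic_def
    using n by (intro exI[of _ 1]) simp
  ultimately show "\<exists>y\<in>orbit (shape ev) x. cyclic (shape ev) y" by blast
qed

lemma cp_ev:
  assumes "cpred (\<lambda>z. ev (p1 z) (p2 z))" "computable A" "computable B"
  shows "cpred (\<lambda>x. ev (A x) (B x))"
proof -
  define \<chi> where "\<chi> = (\<lambda>z. if ev (p1 z) (p2 z) then 1 else (0::nat))"
  have c: "computable \<chi>" using assms(1) unfolding cpred_def \<chi>_def by simp
  have "computable (\<lambda>x. \<chi> (pr (A x) (B x)))"
    by (rule computable_comp[OF c c_pr[OF assms(2,3)]])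
  then show ?thesis unfolding cpred_def \<chi>_def by simp
qed

lemma shape_computable:
  assumes "cpred (\<lambda>z. ev (p1 z) (p2 z))"
  shows "computable (shape ev)"
proof -
  have "computable (\<lambda>x. shape ev x)"
    unfolding shape_def Let_def Ec_def Sc_def
    by (intro cI cp_ev[OF assms])
  then show ?thesis by simp
qed

lemma iso_fun_fixed:
  assumes fx: "f x = x" and pre: "f -` {x} = {x, y}" and ne: "y \<noteq> x"
  shows "iso_fun f x = 0"
proof -
  have fy: "f y = x" using pre by auto
  have nofix: "False" if h: "a \<in> tree_verts f y" "f a = a" for a
  proof -
    obtain n where "(f ^^ n) a = y" using h(1) unfolding tree_verts_def by blast
    then have "a = y" using fix_funpow[of f a n, OF h(2)] by simp
    then show False using h(2) fy ne by simp
  qed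
  have xv: "x \<in> tree_verts f x" unfolding tree_verts_def by (auto intro: exI[of _ 0])
  have xe: "(x, x) \<in> tree_edges f x" unfolding tree_edges_def using xv fx by auto
  have n1: "\<not> tree_iso f x y"
  proof
    assume "tree_iso f x y"
    then obtain h where h: "bij_betw h (tree_verts f x) (tree_verts f y)"
      "\<forall>a\<in>tree_verts f x. \<forall>b\<in>tree_verts f x. (a, b) \<in> tree_edges f x \<longleftrightarrow> (h a, h b) \<in> tree_edges f y"
      unfolding tree_iso_def by blast
    have "(h x, h x) \<in> tree_edges f y" using h(2) xv xe by blast
    then obtain a where "a \<in> tree_verts f y" "f a = a" unfolding tree_edges_def by auto
    then show False using nofix by blast
  qed
  have n2: "\<not> tree_iso f y x"
  proof
    assume "tree_iso f y x"
    then obtain h where h: "bij_betw h (tree_verts f y) (tree_verts f x)"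
      "\<forall>a\<in>tree_verts f y. \<forall>b\<in>tree_verts f y. (a, b) \<in> tree_edges f y \<longleftrightarrow> (h a, h b) \<in> tree_edges f x"
      unfolding tree_iso_def by blast
    have "x \<in> h ` tree_verts f y" using h(1) xv by (simp add: bij_betw_def)
    then obtain a where a: "a \<in> tree_verts f y" "h a = x" by blast
    have "(a, a) \<in> tree_edges f y" using h(2) a xe by auto
    then have "f a = a" unfolding tree_edges_def by auto
    then show False using nofix a(1) by blast
  qed
  have "\<not> (\<exists>x1 x2. x1 \<noteq> x2 \<and> f x1 = x \<and> f x2 = x \<and> tree_iso f x1 x2)"
  proof
    assume "\<exists>x1 x2. x1 \<noteq> x2 \<and> f x1 = x \<and> f x2 = x \<and> tree_iso f x1 x2"
    then obtain x1 x2 where c: "x1 \<noteq> x2" "f x1 = x" "f x2 = x" "tree_iso f x1 x2" by blast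
    have "x1 \<in> {x, y}" "x2 \<in> {x, y}" using c(2,3) pre by auto
    then show False using c n1 n2 by auto
  qed
  then show ?thesis unfolding iso_fun_def by simp
qed


definition cfg :: "nat \<Rightarrow> nat \<Rightarrow> nat \<Rightarrow> nat" where
  "cfg e i k = (step ^^ k) (Ev e (cns (2 * i) 0) 0)"
definition hlt :: "nat \<Rightarrow> bool" where "hlt z \<longleftrightarrow> p1 z = 1 \<and> p2 (p2 z) = 0"
definition ov :: "nat \<Rightarrow> nat" where "ov z = p1 (p2 z)"
definition conv :: "nat \<Rightarrow> nat \<Rightarrow> bool" where "conv e k \<longleftrightarrow> (\<forall>i \<le> 2 * e. hlt (cfg e i k))"
definition gd :: "nat \<Rightarrow> nat \<Rightarrow> nat \<Rightarrow> bool" where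
  "gd e k i \<longleftrightarrow> even (ov (cfg e i k)) \<and> 2 * e \<le> ov (cfg e i k) div 2"
definition tix :: "nat \<Rightarrow> nat \<Rightarrow> nat" where "tix e k = (LEAST i. 2 * e < i \<or> gd e k i)"
definition tv :: "nat \<Rightarrow> nat \<Rightarrow> nat" where "tv e k = ov (cfg e (tix e k) k) div 2"
definition evB :: "nat \<Rightarrow> nat \<Rightarrow> bool" where
  "evB j k \<longleftrightarrow> 0 < k \<and> (\<exists>e \<le> j div 2. conv e k \<and> tix e k \<le> 2 * e \<and> tv e k = j)"

lemma hlt_Rt: "hlt z \<Longrightarrow> z = Rt (ov z) 0"
  unfolding hlt_def ov_def Rt_def by (metis pr_p12)

lemma hlt_Rt'[simp]: "hlt (Rt v 0)" "ov (Rt v 0) = v"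
  unfolding hlt_def ov_def Rt_def by simp_all

lemma cfg_stable: "hlt (cfg e i k) \<Longrightarrow> k \<le> k' \<Longrightarrow> cfg e i k' = cfg e i k"
  unfolding cfg_def using hlt_Rt halt_stable by metis

lemma conv_mono: "conv e k \<Longrightarrow> k \<le> k' \<Longrightarrow> conv e k' \<and> (\<forall>i \<le> 2 * e. cfg e i k' = cfg e i k)"
proof -
  assume a: "conv e k" "k \<le> k'"
  have eq: "\<forall>i \<le> 2 * e. cfg e i k' = cfg e i k"
  proof (intro allI impI)
    fix i assume "i \<le> 2 * e"
    then have "hlt (cfg e i k)" using a(1) unfolding conv_def by blast
    then show "cfg e i k' = cfg e i k" using cfg_stable a(2) by blast
  qed
  have "conv e k'" unfolding conv_def
  proof (intro allI impI)
    fix i assume i: "i \<le> 2 * e"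
    then have "hlt (cfg e i k)" using a(1) unfolding conv_def by blast
    then show "hlt (cfg e i k')" using eq i by simp
  qed
  then show ?thesis using eq by blast
qed

lemma tix_stable:
  assumes "conv e k" "k \<le> k'"
  shows "tix e k' = tix e k" "tix e k \<le> 2 * e \<Longrightarrow> tv e k' = tv e k"
proof -
  have c: "\<forall>i \<le> 2 * e. cfg e i k' = cfg e i k" using conv_mono[OF assms] by blast
  have "(\<lambda>i. 2 * e < i \<or> gd e k' i) = (\<lambda>i. 2 * e < i \<or> gd e k i)"
  proof
    fix i show "(2 * e < i \<or> gd e k' i) = (2 * e < i \<or> gd e k i)"
      using c unfolding gd_def by (cases "i \<le> 2 * e") auto
  qed
  then show t: "tix e k' = tix e k" unfolding tix_def by simp
  show "tix e k \<le> 2 * e \<Longrightarrow> tv e k' = tv e k"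
    unfolding tv_def using t c by simp
qed

lemma W_evB: "W evB"
  unfolding W_def
proof (intro conjI allI impI)
  fix j show "\<not> evB j 0" unfolding evB_def by simp
next
  fix j k k' assume a: "evB j k" "k \<le> k'"
  then obtain e where e: "e \<le> j div 2" "conv e k" "tix e k \<le> 2 * e" "tv e k = j" "0 < k"
    unfolding evB_def by blast
  have "conv e k'" using conv_mono[OF e(2) a(2)] by blast
  moreover have "tix e k' \<le> 2 * e" "tv e k' = j" using tix_stable[OF e(2) a(2)] e by simp_all
  ultimately show "evB j k'" unfolding evB_def using e(1,5) a(2) by auto
qed

lemma bex_least: "(\<exists>e \<le> (B::nat). Q e) \<longleftrightarrow> (LEAST e. B < e \<or> Q e) \<le> B"
proof
  assume "\<exists>e \<le> B. Q e"
  then obtain e where "e \<le> B" "Q e" by blast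
  then show "(LEAST e. B < e \<or> Q e) \<le> B" using Least_le[of "\<lambda>e. B < e \<or> Q e" e] by simp
next
  assume a: "(LEAST e. B < e \<or> Q e) \<le> B"
  have "B < (LEAST e. B < e \<or> Q e) \<or> Q (LEAST e. B < e \<or> Q e)"
    by (rule LeastI[of _ "Suc B"]) simp
  then show "\<exists>e \<le> B. Q e" using a by auto
qed

lemma ball_least: "(\<forall>e \<le> (B::nat). Q e) \<longleftrightarrow> \<not> (LEAST e. B < e \<or> \<not> Q e) \<le> B"
  using bex_least[of B "\<lambda>e. \<not> Q e"] by auto

lemma evB_computable: "cpred (\<lambda>z. evB (p1 z) (p2 z))"
proof -
  have "cpred (\<lambda>z. 0 < p2 z \<and> (LEAST e. p1 z div 2 < e \<or> (\<not> (LEAST i. 2 * e < i \<or> \<not> hlt (cfg e i (p2 z))) \<le> 2 * e \<and> tix e (p2 z) \<le> 2 * e \<and> tv e (p2 z) = p1 z)) \<le> p1 z div 2)"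
    unfolding hlt_def tix_def tv_def gd_def ov_def cfg_def Ev_def cns_def
    apply (intro cI computable_step)
    apply auto
    done
  then show ?thesis unfolding evB_def conv_def
    by (simp only: ball_least[symmetric] bex_least[symmetric] not_not) simp
qed


lemma inf_unev: "infinite {j. \<not> (\<exists>k. evB j k)}"
proof
  assume fin: "finite {j. \<not> (\<exists>k. evB j k)}"
  then obtain M where M: "\<forall>j \<in> {j. \<not> (\<exists>k. evB j k)}. j < M"
    using finite_nat_set_iff_bounded by blast
  have evM: "\<exists>k. evB j k" if "M \<le> j" for j using M that by force
  define sel where "sel j = (SOME e. \<exists>k. e \<le> j div 2 \<and> conv e k \<and> tix e k \<le> 2 * e \<and> tv e k = j)" for j
  have selP: "\<exists>k. sel j \<le> j div 2 \<and> conv (sel j) k \<and> tix (sel j) k \<le> 2 * sel j \<and> tv (sel j) k = j"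
    if h: "M \<le> j" for j
  proof -
    obtain k where "evB j k" using evM[OF h] by blast
    then have "\<exists>e. \<exists>k. e \<le> j div 2 \<and> conv e k \<and> tix e k \<le> 2 * e \<and> tv e k = j"
      unfolding evB_def by blast
    then show ?thesis unfolding sel_def by (rule someI_ex)
  qed
  have inj: "inj_on sel {M..<2 * M + 2}"
  proof (rule inj_onI)
    fix j j' assume j: "j \<in> {M..<2 * M + 2}" and j': "j' \<in> {M..<2 * M + 2}" and eq: "sel j = sel j'"
    obtain k where k: "conv (sel j) k" "tix (sel j) k \<le> 2 * sel j" "tv (sel j) k = j"
      using selP[of j] j by auto
    obtain k' where k': "conv (sel j) k'" "tix (sel j) k' \<le> 2 * sel j" "tv (sel j) k' = j'"
      using selP[of j'] j' eq by auto
    have "tv (sel j) (max k k') = j" using tix_stable(2)[OF k(1), of "max k k'"] k by simp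
    moreover have "tv (sel j) (max k k') = j'" using tix_stable(2)[OF k'(1), of "max k k'"] k' by simp
    ultimately show "j = j'" by simp
  qed
  have sub: "sel ` {M..<2 * M + 2} \<subseteq> {..M}"
  proof
    fix e assume "e \<in> sel ` {M..<2 * M + 2}"
    then obtain j where j: "j \<in> {M..<2 * M + 2}" "e = sel j" by blast
    then have "e \<le> j div 2" using selP[of j] by auto
    moreover have "j div 2 \<le> M" using j(1) by auto
    ultimately show "e \<in> {..M}" by simp
  qed
  have "card {M..<2 * M + 2} \<le> card {..M}" by (rule card_inj_on_le[OF inj sub]) simp
  then show False by simp
qed

lemma good_B: "good (shape evB)"
  by (rule shape_good[OF W_evB inf_unev])

lemma W_A: "W (\<lambda>j k. False)" unfolding W_def by simp

lemma good_A: "good (shape (\<lambda>j k. False))"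
  by (rule shape_good[OF W_A]) simp

lemma no_comp_iso: "\<not> (\<exists>h. computable h \<and> struct_iso (shape (\<lambda>j k. False)) (shape evB) h)"
proof
  assume "\<exists>h. computable h \<and> struct_iso (shape (\<lambda>j k. False)) (shape evB) h"
  then obtain h where hc: "computable h" and hi: "struct_iso (shape (\<lambda>j k. False)) (shape evB) h" by blast
  obtain c where c: "\<And>x. eval c [x] (h x)" using hc unfolding computable_def by blast
  define e where "e = enc c"
  have Pimg: "\<exists>j. h (2 * i) = 2 * j \<and> \<not> (\<exists>k. evB j k)" for i
  proof -
    have "isP (shape (\<lambda>j k. False)) (2 * i)" using isP_shape[OF W_A] by blast
    then have "isP (shape evB) (h (2 * i))" by (rule iso_isP[OF hi])
    then show ?thesis using isP_shape[OF W_evB] by blast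
  qed
  have hinj: "inj h" using hi unfolding struct_iso_def bij_def by blast
  define N where "N i = (SOME n. (step ^^ n) (Ev e (cns (2 * i) 0) 0) = Rt (h (2 * i)) 0)" for i
  have Nprop: "(step ^^ N i) (Ev e (cns (2 * i) 0) 0) = Rt (h (2 * i)) 0" for i
    unfolding N_def e_def by (rule someI_ex[OF comp_sim[OF c]])
  define K where "K = Suc (Max (N ` {..2 * e}))"
  have NK: "N i \<le> K" if "i \<le> 2 * e" for i
  proof -
    have "N i \<le> Max (N ` {..2 * e})" using that by (intro Max_ge) auto
    then show ?thesis unfolding K_def by simp
  qed
  have cfgK: "cfg e i K = Rt (h (2 * i)) 0" if "i \<le> 2 * e" for i
    unfolding cfg_def using halt_stable[OF Nprop NK[OF that]] .
  have convK: "conv e K" unfolding conv_def using cfgK by simp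
  define jj where "jj i = h (2 * i) div 2" for i
  have hjj: "h (2 * i) = 2 * jj i" for i
    using Pimg[of i] unfolding jj_def by auto
  have unev: "\<not> (\<exists>k. evB (jj i) k)" for i
    using Pimg[of i] hjj[of i] by auto
  have ex: "\<exists>i \<le> 2 * e. 2 * e \<le> jj i"
  proof (rule ccontr)
    assume "\<not> (\<exists>i \<le> 2 * e. 2 * e \<le> jj i)"
    then have sub: "jj ` {..2 * e} \<subseteq> {..<2 * e}" by auto
    have inj: "inj_on jj {..2 * e}"
    proof (rule inj_onI)
      fix a b assume "jj a = jj b"
      then have "h (2 * a) = h (2 * b)" using hjj by simp
      then show "a = b" using hinj by (simp add: inj_eq)
    qed
    have "card {..2 * e} \<le> card {..<2 * e}" by (rule card_inj_on_le[OF inj sub]) simp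
    then show False by simp
  qed
  then obtain i where i: "i \<le> 2 * e" "2 * e \<le> jj i" by blast
  have gdi: "gd e K i" unfolding gd_def using cfgK[OF i(1)] hjj[of i] i(2) by simp
  let ?i0 = "tix e K"
  have i0le: "?i0 \<le> i" unfolding tix_def by (rule Least_le) (use gdi in simp)
  then have i0: "?i0 \<le> 2 * e" using i(1) by simp
  have "2 * e < ?i0 \<or> gd e K ?i0" unfolding tix_def by (rule LeastI[of _ i]) (use gdi in simp)
  then have gd0: "gd e K ?i0" using i0 by simp
  have tvK: "tv e K = jj ?i0" unfolding tv_def using cfgK[OF i0] hjj[of ?i0] by simp
  have "2 * e \<le> jj ?i0" using gd0 cfgK[OF i0] hjj[of ?i0] unfolding gd_def by simp
  then have "e \<le> jj ?i0 div 2" by simp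
  then have "evB (jj ?i0) K" unfolding evB_def using convK i0 tvK K_def by auto
  then show False using unev by blast
qed

lemma branching_A:
  "branching (shape (\<lambda>j k. False)) x = (if odd x \<and> even (x div 2) \<and> p2 (x div 2 div 2) = 0 then 2 else 1)"
  using classify[of x]
proof (elim disjE exE)
  fix j assume "x = 2 * j" then show ?thesis using card_pre_even[OF W_A] by (simp add: branching_def)
next
  fix j k assume x: "x = Ec j k"
  have d: "x div 2 div 2 = pr j k" "odd x" "even (x div 2)" using Ec_div[of j k] x by simp_all
  show ?thesis
  proof (cases k)
    case 0 then show ?thesis using x d pre_E0[OF W_A] by (simp add: branching_def)
  next
    case (Suc m) then show ?thesis using x d pre_ES[OF W_A] by (simp add: branching_def)
  qed
next
  fix j k assume x: "x = Sc j k"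
  have d: "odd (x div 2)" using Sc_div[of j k] x by simp
  show ?thesis using x d pre_S[OF W_A] by (simp add: branching_def)
qed

lemma Lambda_A: "x \<in> Lambda (shape (\<lambda>j k. False)) \<Longrightarrow> \<exists>j. x = Ec j 0"
  unfolding Lambda_def
  using classify[of x]
proof (elim disjE exE)
  fix j assume "x = 2 * j" "x \<in> {x. branching (shape (\<lambda>j k. False)) x = 2}"
  then show ?thesis using branching_A[of x] by simp
next
  fix j k assume x: "x = Ec j k" and b: "x \<in> {x. branching (shape (\<lambda>j k. False)) x = 2}"
  have d: "x div 2 div 2 = pr j k" "odd x" "even (x div 2)" using Ec_div[of j k] x by simp_all
  then have "k = 0" using b branching_A[of x] by (auto split: if_splits)
  then show ?thesis using x by blast
next
  fix j k assume x: "x = Sc j k" and b: "x \<in> {x. branching (shape (\<lambda>j k. False)) x = 2}"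
  have d: "odd (x div 2)" using Sc_div[of j k] x by simp
  then show ?thesis using b branching_A[of x] by simp
qed

theorem proposition3p3:
  shows "\<exists>f. is_21_1 f \<and> computable f \<and> no_Z_chains f \<and>
    computable (branching f) \<and> computable_on (Lambda f) (iso_fun f) \<and>
    (\<exists>g. is_21_1 g \<and> computable g \<and> (\<exists>h. struct_iso f g h) \<and>
         \<not> (\<exists>h. computable h \<and> struct_iso f g h))"
proof -
  let ?f = "shape (\<lambda>j k. False)" and ?g = "shape evB"
  have f1: "is_21_1 ?f" by (rule shape_21[OF W_A])
  have f2: "computable ?f" by (rule shape_computable) (simp add: cp_False)
  have f3: "no_Z_chains ?f" by (rule shape_noZ[OF W_A])
  have "computable (\<lambda>x. if odd x \<and> even (x div 2) \<and> p2 (x div 2 div 2) = 0 then 2 else 1)"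
    by (intro cI)
  moreover have "branching ?f = (\<lambda>x. if odd x \<and> even (x div 2) \<and> p2 (x div 2 div 2) = 0 then 2 else 1)"
    by (rule ext) (rule branching_A)
  ultimately have f4: "computable (branching ?f)" by simp
  have f5: "computable_on (Lambda ?f) (iso_fun ?f)"
    unfolding computable_on_def
  proof (intro exI[of _ Zero] ballI)
    fix x assume "x \<in> Lambda ?f"
    then obtain j where x: "x = Ec j 0" using Lambda_A by blast
    have "iso_fun ?f x = 0"
      by (rule iso_fun_fixed[of _ _ "Sc j 0"]) (use x pre_E0[OF W_A] in simp_all)
    then show "eval Zero [x] (iso_fun ?f x)" using eval_Zero by simp
  qed
  have g1: "is_21_1 ?g" by (rule shape_21[OF W_evB])
  have g2: "computable ?g" by (rule shape_computable[OF evB_computable])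
  have g3: "\<exists>h. struct_iso ?f ?g h" by (rule good_iso[OF good_A good_B])
  have g4: "\<not> (\<exists>h. computable h \<and> struct_iso ?f ?g h)" by (rule no_comp_iso)
  have G: "\<exists>g. is_21_1 g \<and> computable g \<and> (\<exists>h. struct_iso ?f g h) \<and>
         \<not> (\<exists>h. computable h \<and> struct_iso ?f g h)"
    by (rule exI[of _ ?g]) (use g1 g2 g3 g4 in blast)
  show ?thesis by (rule exI[of _ ?f]) (use f1 f2 f3 f4 f5 G in blast)
qed


end
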